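(* An $AB\bar B$-formula $\varphi$ is satisfied by some finite interval structure if and only if it is featured by some $\varphi$-compass structure of length $N\le 2^{2^{7|\varphi|}}$.
   Context: Syntax: $AB\bar B$-formulas are built from a set $\mathcal{P}$ of propositional variables using $\neg$, $\vee$ and unary modalities $\langle A\rangle,\langle B\rangle,\langle\bar B\rangle$ ($[R]\psi=\neg\langle R\rangle\neg\psi$); $|\varphi|$ is the size (number of subformulas) of $\varphi$. Semantics: an ordinal $N\le\omega$ is identified with $\{0,\dots,N-1\}$; $\mathbb{I}_N$ is the set of intervals $[x,y]$ with $x,y\in N$, $x<y$. $[x,y]\,A\,[x',y']$ iff $y=x'$; $[x,y]\,B\,[x',y']$ iff $x=x'$ and $y'<y$; $[x,y]\,\bar B\,[x',y']$ iff $x=x'$ and $y<y'$. An interval structure $\mathcal{S}=(\mathbb{I}_N,A,B,\bar B,\sigma)$ has $\sigma:\mathbb{I}_N\to\mathcal{P}(\mathcal{P})$; it is finite if $N<\omega$. $\mathcal{S},I\models p$ iff $p\in\sigma(I)$; booleans as usual; $\mathcal{S},I\models\langle R\rangle\psi$ iff some $J$ with $I\,R\,J$ has $\mathcal{S},J\models\psi$. $\mathcal{S}$ satisfies $\varphi$ if $\mathcal{S},I\models\varphi$ for some $I$. Atoms: $Cl(\varphi)$ is the set of subformulas of $\varphi$ and their negations (identifying $\neg\neg\alpha$ with $\alpha$, $\neg\langle R\rangle\alpha$ with $[R]\neg\alpha$); $Cl^+(\varphi)$ adds all $\langle R\rangle\alpha$, $\neg\langle R\rangle\alpha$ for $R\in\{A,B,\bar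 B\}$, $\alpha\in Cl(\varphi)$. A $\varphi$-atom is a nonempty $F\subseteq Cl^+(\varphi)$ with: $\alpha\in F$ iff $\neg\alpha\notin F$ for all $\alpha\in Cl^+(\varphi)$, and $\alpha\vee\beta\in F$ iff $\alpha\in F$ or $\beta\in F$. $obs(F)=\{\alpha\in Cl(\varphi):\alpha\in F\}$, $Req_R(F)=\{\alpha\in Cl(\varphi):\langle R\rangle\alpha\in F\}$. $F\leadsto_A G$ iff $Req_A(F)=obs(G)\cup Req_B(G)\cup Req_{\bar B}(G)$; $F\leadsto_B G$ iff $obs(F)\cup Req_{\bar B}(F)\subseteq Req_{\bar B}(G)\subseteq obs(F)\cup Req_{\bar B}(F)\cup Req_B(F)$ and $obs(G)\cup Req_B(G)\subseteq Req_B(F)\subseteq obs(G)\cup Req_B(G)\cup Req_{\bar B}(G)$. Compass structures: $\mathbb{P}_N=\{(x,y):0\le x<y<N\}$ with relations $A,B,\bar B$ as for the intervals $[x,y]$. A $\varphi$-compass structure of length $N$ is $(\mathbb{P}_N,\mathcal{L})$, $\mathcal{L}$ mapping points to $\varphi$-atoms, such that $p\,R\,q$ implies $\mathcal{L}(p)\leadsto_R\mathcal{L}(q)$ for $R\in\{A,B\}$ (consistency), and for every $p$, $R\in\{A,B,\bar B\}$, $\alpha\in Req_R(\mathcal{L}(p))$ there is $q$ with $p\,R\,q$ and $\alpha\in obs(\mathcal{L}(q))$ (fulfillment). It features $\alpha$ if $\alpha\in\mathcal{L}(p)$ for some $p$. *)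

theory Defs
  imports Main
begin

datatype rel = RA | RB | RBb

datatype 'p form = Var 'p | Neg "'p form" | Or "'p form" "'p form" | Dia rel "'p form"

abbreviation Box :: "rel \<Rightarrow> 'p form \<Rightarrow> 'p form" where
  "Box R a \<equiv> Neg (Dia R (Neg a))"

fun subs :: "'p form \<Rightarrow> 'p form set" where
  "subs (Var p) = {Var p}"
| "subs (Neg a) = insert (Neg a) (subs a)"
| "subs (Or a b) = insert (Or a b) (subs a \<union> subs b)"
| "subs (Dia R a) = insert (Dia R a) (subs a)"

definition fsize :: "'p form \<Rightarrow> nat" where
  "fsize phi = card (subs phi)"

fun sat :: "nat \<Rightarrow> (nat \<Rightarrow> nat \<Rightarrow> 'p set) \<Rightarrow> nat \<Rightarrow> nat \<Rightarrow> 'p form \<Rightarrow> bool" where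
  "sat N \<sigma> x y (Var p) = (p \<in> \<sigma> x y)"
| "sat N \<sigma> x y (Neg a) = (\<not> sat N \<sigma> x y a)"
| "sat N \<sigma> x y (Or a b) = (sat N \<sigma> x y a \<or> sat N \<sigma> x y b)"
| "sat N \<sigma> x y (Dia RA a) = (\<exists>z. y < z \<and> z < N \<and> sat N \<sigma> y z a)"
| "sat N \<sigma> x y (Dia RB a) = (\<exists>z. x < z \<and> z < y \<and> sat N \<sigma> x z a)"
| "sat N \<sigma> x y (Dia RBb a) = (\<exists>z. y < z \<and> z < N \<and> sat N \<sigma> x z a)"

definition fin_satisfiable :: "'p form \<Rightarrow> bool" where
  "fin_satisfiable phi \<longleftrightarrow>
     (\<exists>(N::nat) \<sigma> x y. x < y \<and> y < N \<and> sat N \<sigma> x y phi)"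

fun neg :: "'p form \<Rightarrow> 'p form" where
  "neg (Neg a) = a"
| "neg a = Neg a"

text \<open>Normal form modulo the identification of \<not>\<not>alpha with alpha
  (the identification of \<not><R>alpha with [R]\<not>alpha is then syntactic identity).\<close>
fun norm :: "'p form \<Rightarrow> 'p form" where
  "norm (Var p) = Var p"
| "norm (Neg a) = neg (norm a)"
| "norm (Or a b) = Or (norm a) (norm b)"
| "norm (Dia R a) = Dia R (norm a)"

definition Cl :: "'p form \<Rightarrow> 'p form set" where
  "Cl phi = norm ` subs phi \<union> neg ` norm ` subs phi"

definition ClPlus :: "'p form \<Rightarrow> 'p form set" where
  "ClPlus phi = Cl phi \<union> {Dia R a | R a. a \<in> Cl phi} \<union> {neg (Dia R a) | R a. a \<in> Cl phi}"

definition is_atom :: "'p form \<Rightarrow> 'p form set \<Rightarrow> bool" where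
  "is_atom phi F \<longleftrightarrow> F \<noteq> {} \<and> F \<subseteq> ClPlus phi
     \<and> (\<forall>a \<in> ClPlus phi. a \<in> F \<longleftrightarrow> neg a \<notin> F)
     \<and> (\<forall>a b. Or a b \<in> ClPlus phi \<longrightarrow> (Or a b \<in> F \<longleftrightarrow> a \<in> F \<or> b \<in> F))"

definition obs :: "'p form \<Rightarrow> 'p form set \<Rightarrow> 'p form set" where
  "obs phi F = {a \<in> Cl phi. a \<in> F}"

definition Req :: "'p form \<Rightarrow> rel \<Rightarrow> 'p form set \<Rightarrow> 'p form set" where
  "Req phi R F = {a \<in> Cl phi. Dia R a \<in> F}"

definition leadsA :: "'p form \<Rightarrow> 'p form set \<Rightarrow> 'p form set \<Rightarrow> bool" where
  "leadsA phi F G \<longleftrightarrow> Req phi RA F = obs phi G \<union> Req phi RB G \<union> Req phi RBb G"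

definition leadsB :: "'p form \<Rightarrow> 'p form set \<Rightarrow> 'p form set \<Rightarrow> bool" where
  "leadsB phi F G \<longleftrightarrow>
     obs phi F \<union> Req phi RBb F \<subseteq> Req phi RBb G
   \<and> Req phi RBb G \<subseteq> obs phi F \<union> Req phi RBb F \<union> Req phi RB F
   \<and> obs phi G \<union> Req phi RB G \<subseteq> Req phi RB F
   \<and> Req phi RB F \<subseteq> obs phi G \<union> Req phi RB G \<union> Req phi RBb G"

definition points :: "nat \<Rightarrow> (nat \<times> nat) set" where
  "points N = {(x, y). x < y \<and> y < N}"

fun prel :: "rel \<Rightarrow> nat \<times> nat \<Rightarrow> nat \<times> nat \<Rightarrow> bool" where
  "prel RA (x, y) (x', y') = (y = x')"
| "prel RB (x, y) (x', y') = (x = x' \<and> y' < y)"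
| "prel RBb (x, y) (x', y') = (x = x' \<and> y < y')"

definition compass :: "'p form \<Rightarrow> nat \<Rightarrow> (nat \<times> nat \<Rightarrow> 'p form set) \<Rightarrow> bool" where
  "compass phi N L \<longleftrightarrow>
     (\<forall>p \<in> points N. is_atom phi (L p))
   \<and> (\<forall>p \<in> points N. \<forall>q \<in> points N. prel RA p q \<longrightarrow> leadsA phi (L p) (L q))
   \<and> (\<forall>p \<in> points N. \<forall>q \<in> points N. prel RB p q \<longrightarrow> leadsB phi (L p) (L q))
   \<and> (\<forall>p \<in> points N. \<forall>R. \<forall>a \<in> Req phi R (L p).
        \<exists>q \<in> points N. prel R p q \<and> a \<in> obs phi (L q))"

definition features :: "'p form \<Rightarrow> nat \<Rightarrow> (nat \<times> nat \<Rightarrow> 'p form set) \<Rightarrow> 'p form \<Rightarrow> bool" where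
  "features phi N L a \<longleftrightarrow> (\<exists>p \<in> points N. a \<in> L p)"

end

theory Submission
  imports Defs
begin

lemma subs_self: "phi \<in> subs phi"
  by (cases phi) auto

lemma subs_trans: "x \<in> subs phi \<Longrightarrow> subs x \<subseteq> subs phi"
  by (induction phi) auto

lemma finite_subs: "finite (subs phi)"
  by (induction phi) auto

lemma sat_neg: "sat N \<sigma> x y (neg a) = (\<not> sat N \<sigma> x y a)"
  by (cases a) auto

lemma sat_norm: "sat N \<sigma> x y (norm a) = sat N \<sigma> x y a"
proof (induction a arbitrary: x y)
  case (Dia R a) then show ?case by (cases R) auto
qed (auto simp: sat_neg)

lemma neg_nonNeg: "(\<forall>c. u \<noteq> Neg c) \<Longrightarrow> neg u = Neg u"
  by (cases u) auto

lemma norm_nn: "norm a \<noteq> Neg (Neg c)"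
proof (induction a arbitrary: c)
  case (Neg a)
  then show ?case
    by (cases "norm a") auto
qed auto

lemma neg_neg: "(\<And>c. t \<noteq> Neg (Neg c)) \<Longrightarrow> neg (neg t) = t"
  apply (cases t)
     apply auto
  subgoal for x by (cases x) auto
  done

lemma neg_neg_norm: "neg (neg (norm a)) = norm a"
  using norm_nn[of a] neg_neg by blast

definition decomp_in :: "'p form set \<Rightarrow> 'p form \<Rightarrow> bool" where
"decomp_in S t \<longleftrightarrow> (\<forall>a b. t = Or a b \<longrightarrow> a \<in> S \<and> b \<in> S) \<and> (\<forall>c. t = Neg c \<longrightarrow> c \<in> S)
   \<and> (\<forall>R c. t = Dia R c \<longrightarrow> c \<in> S)"

lemma decomp_mono: "decomp_in S t \<Longrightarrow> S \<subseteq> T \<Longrightarrow> decomp_in T t"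
  unfolding decomp_in_def by blast

lemma decomp_subs: "w \<in> subs x \<Longrightarrow> decomp_in (norm ` subs x) (norm w)"
proof (induction x arbitrary: w)
  case (Var p) then show ?case by (auto simp: decomp_in_def)
next
  case (Neg x)
  have sub: "norm ` subs x \<subseteq> norm ` subs (Neg x)" by auto
  show ?case
  proof (cases "w \<in> subs x")
    case True then show ?thesis using Neg.IH decomp_mono sub by blast
  next
    case False
    then have w: "w = Neg x" using Neg.prems by auto
    show ?thesis
    proof (cases "\<exists>c. norm x = Neg c")
      case True
      then obtain c where c: "norm x = Neg c" by auto
      have "decomp_in (norm ` subs x) (norm x)" using Neg.IH subs_self by blast
      then have "c \<in> norm ` subs x" using c by (auto simp: decomp_in_def)
      then obtain w' where w': "w' \<in> subs x" "c = norm w'" by auto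
      have "decomp_in (norm ` subs x) c" using Neg.IH w' by blast
      then show ?thesis using w c sub decomp_mono by fastforce
    next
      case False
      then have "norm w = Neg (norm x)" using w neg_nonNeg by auto
      then show ?thesis using subs_self[of x] by (auto simp: decomp_in_def)
    qed
  qed
next
  case (Or x1 x2)
  have s1: "norm ` subs x1 \<subseteq> norm ` subs (Or x1 x2)" and s2: "norm ` subs x2 \<subseteq> norm ` subs (Or x1 x2)" by auto
  show ?case
  proof (cases "w = Or x1 x2")
    case True then show ?thesis using subs_self[of x1] subs_self[of x2] by (auto simp: decomp_in_def)
  next
    case False
    then have "w \<in> subs x1 \<or> w \<in> subs x2" using Or.prems by auto
    then show ?thesis using Or.IH decomp_mono s1 s2 by blast
  qed
next
  case (Dia R x)
  have s1: "norm ` subs x \<subseteq> norm ` subs (Dia R x)" by auto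
  show ?case
  proof (cases "w = Dia R x")
    case True then show ?thesis using subs_self[of x] by (auto simp: decomp_in_def)
  next
    case False then show ?thesis using Dia decomp_mono s1 by auto
  qed
qed

lemma Cl_decomp: "t \<in> Cl phi \<Longrightarrow> decomp_in (Cl phi) t"
proof -
  assume "t \<in> Cl phi"
  have sub: "norm ` subs phi \<subseteq> Cl phi" by (auto simp: Cl_def)
  have D: "\<And>x. x \<in> subs phi \<Longrightarrow> decomp_in (Cl phi) (norm x)"
    using decomp_subs decomp_mono sub by blast
  from \<open>t \<in> Cl phi\<close> obtain x where x: "x \<in> subs phi" "t = norm x \<or> t = neg (norm x)"
    by (auto simp: Cl_def)
  show ?thesis
  proof (cases "t = norm x")
    case True then show ?thesis using D x by auto
  next
    case False
    then have t: "t = neg (norm x)" using x by auto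
    show ?thesis
    proof (cases "\<exists>c. norm x = Neg c")
      case True
      then obtain c where c: "norm x = Neg c" by auto
      have "c \<in> norm ` subs phi" using decomp_subs[OF x(1)] subs_trans[OF x(1)] c
        by (auto simp: decomp_in_def)
      then show ?thesis using t c D by auto
    next
      case False
      then have "t = Neg (norm x)" using t neg_nonNeg by auto
      then show ?thesis using x sub by (auto simp: decomp_in_def)
    qed
  qed
qed

lemma normphi_Cl: "norm phi \<in> Cl phi"
  using subs_self[of phi] by (auto simp: Cl_def)

lemma Cl_neg: "t \<in> Cl phi \<Longrightarrow> neg t \<in> Cl phi"
  by (auto simp: Cl_def neg_neg_norm)

lemma Cl_ClPlus: "t \<in> Cl phi \<Longrightarrow> t \<in> ClPlus phi"
  by (auto simp: ClPlus_def)

lemma Dia_ClPlus: "t \<in> Cl phi \<Longrightarrow> Dia R t \<in> ClPlus phi"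
  by (auto simp: ClPlus_def)

lemma ClPlus_neg: "t \<in> ClPlus phi \<Longrightarrow> neg t \<in> ClPlus phi"
  unfolding ClPlus_def using Cl_neg by fastforce

lemma ClPlus_Or: "Or a b \<in> ClPlus phi \<Longrightarrow> a \<in> Cl phi \<and> b \<in> Cl phi"
proof -
  assume "Or a b \<in> ClPlus phi"
  then have "Or a b \<in> Cl phi" by (auto simp: ClPlus_def)
  then show ?thesis using Cl_decomp unfolding decomp_in_def by blast
qed

lemma Cl_Neg: "Neg c \<in> Cl phi \<Longrightarrow> c \<in> Cl phi"
  using Cl_decomp unfolding decomp_in_def by blast
lemma Cl_Or: "Or a b \<in> Cl phi \<Longrightarrow> a \<in> Cl phi \<and> b \<in> Cl phi"
  using Cl_decomp unfolding decomp_in_def by blast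
lemma Cl_Dia: "Dia R c \<in> Cl phi \<Longrightarrow> c \<in> Cl phi"
  using Cl_decomp unfolding decomp_in_def by blast

definition K :: "'p form \<Rightarrow> 'p form set \<Rightarrow> 'p form set" where
  "K phi F = obs phi F \<union> Req phi RB F \<union> Req phi RBb F"

lemma leadsB_K: "leadsB phi F G \<Longrightarrow> K phi F = K phi G"
  unfolding leadsB_def K_def by blast

lemma leadsB_trans: "leadsB phi F G \<Longrightarrow> leadsB phi G H \<Longrightarrow> leadsB phi F H"
  unfolding leadsB_def
  apply (elim conjE)
  apply (intro conjI)
  apply blast+
  done

lemma leadsA_K: "leadsA phi F G \<longleftrightarrow> Req phi RA F = K phi G"
  unfolding leadsA_def K_def by blast

lemma compassI:
  assumes at: "\<And>x y. x<y \<Longrightarrow> y<N \<Longrightarrow> is_atom phi (L(x,y))"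
  and cA: "\<And>x y z. x<y \<Longrightarrow> y<z \<Longrightarrow> z<N \<Longrightarrow> leadsA phi (L(x,y)) (L(y,z))"
  and cB: "\<And>x z z'. x<z' \<Longrightarrow> z'<z \<Longrightarrow> z<N \<Longrightarrow> leadsB phi (L(x,z)) (L(x,z'))"
  and fA: "\<And>x y a. x<y \<Longrightarrow> y<N \<Longrightarrow> a \<in> Req phi RA (L(x,y)) \<Longrightarrow> \<exists>z. y<z \<and> z<N \<and> a \<in> obs phi (L(y,z))"
  and fB: "\<And>x y a. x<y \<Longrightarrow> y<N \<Longrightarrow> a \<in> Req phi RB (L(x,y)) \<Longrightarrow> \<exists>z. x<z \<and> z<y \<and> a \<in> obs phi (L(x,z))"
  and fBb: "\<And>x y a. x<y \<Longrightarrow> y<N \<Longrightarrow> a \<in> Req phi RBb (L(x,y)) \<Longrightarrow> \<exists>z. y<z \<and> z<N \<and> a \<in> obs phi (L(x,z))"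
  shows "compass phi N L"
  unfolding compass_def
proof (intro conjI ballI allI impI)
  fix p assume "p \<in> points N" then show "is_atom phi (L p)" using at by (auto simp: points_def)
next
  fix p q assume "p \<in> points N" "q \<in> points N" "prel RA p q"
  then show "leadsA phi (L p) (L q)" using cA by (cases p, cases q) (simp add: points_def)
next
  fix p q assume "p \<in> points N" "q \<in> points N" "prel RB p q"
  then show "leadsB phi (L p) (L q)" using cB by (cases p, cases q) (simp add: points_def)
next
  fix p R a assume p: "p \<in> points N" and a: "a \<in> Req phi R (L p)"
  obtain x y where xy: "p = (x,y)" "x<y" "y<N" using p by (auto simp: points_def)
  show "\<exists>q\<in>points N. prel R p q \<and> a \<in> obs phi (L q)"
  proof (cases R)
    case RA
    then obtain z where "y<z" "z<N" "a \<in> obs phi (L(y,z))" using fA xy a by blast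
    then show ?thesis using RA xy by (intro bexI[of _ "(y,z)"]) (auto simp: points_def)
  next
    case RB
    then obtain z where "x<z" "z<y" "a \<in> obs phi (L(x,z))" using fB xy a by blast
    then show ?thesis using RB xy by (intro bexI[of _ "(x,z)"]) (auto simp: points_def)
  next
    case RBb
    then obtain z where "y<z" "z<N" "a \<in> obs phi (L(x,z))" using fBb xy a by blast
    then show ?thesis using RBb xy by (intro bexI[of _ "(x,z)"]) (auto simp: points_def)
  qed
qed

context
  fixes phi N L assumes C: "compass phi N L"
begin

lemma c_atom: "x<y \<Longrightarrow> y<N \<Longrightarrow> is_atom phi (L(x,y))"
proof -
  assume "x<y" "y<N"
  then have "(x,y) \<in> points N" by (simp add: points_def)
  then show ?thesis using C unfolding compass_def by blast
qed
lemma c_A: "x<y \<Longrightarrow> y<z \<Longrightarrow> z<N \<Longrightarrow> leadsA phi (L(x,y)) (L(y,z))"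
proof -
  assume "x<y" "y<z" "z<N"
  then have "(x,y) \<in> points N" "(y,z) \<in> points N" by (simp_all add: points_def)
  moreover have "prel RA (x,y) (y,z)" by simp
  ultimately show ?thesis using C unfolding compass_def by blast
qed
lemma c_B: "x<z' \<Longrightarrow> z'<z \<Longrightarrow> z<N \<Longrightarrow> leadsB phi (L(x,z)) (L(x,z'))"
proof -
  assume "x<z'" "z'<z" "z<N"
  then have "(x,z) \<in> points N" "(x,z') \<in> points N" "prel RB (x,z) (x,z')" by (simp_all add: points_def)
  then show ?thesis using C unfolding compass_def by blast
qed
lemma c_ful: "x<y \<Longrightarrow> y<N \<Longrightarrow> a \<in> Req phi R (L(x,y)) \<Longrightarrow> \<exists>q\<in>points N. prel R (x,y) q \<and> a \<in> obs phi (L q)"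
proof -
  assume "x<y" "y<N" "a \<in> Req phi R (L(x,y))"
  moreover have "\<forall>p \<in> points N. \<forall>R. \<forall>a \<in> Req phi R (L p). \<exists>q \<in> points N. prel R p q \<and> a \<in> obs phi (L q)"
    using C unfolding compass_def by blast
  ultimately show ?thesis by (simp add: points_def)
qed
lemma c_fA: "x<y \<Longrightarrow> y<N \<Longrightarrow> a \<in> Req phi RA (L(x,y)) \<Longrightarrow> \<exists>z. y<z \<and> z<N \<and> a \<in> obs phi (L(y,z))"
  using c_ful[of x y a RA] by (auto simp: points_def)
lemma c_fB: "x<y \<Longrightarrow> y<N \<Longrightarrow> a \<in> Req phi RB (L(x,y)) \<Longrightarrow> \<exists>z. x<z \<and> z<y \<and> a \<in> obs phi (L(x,z))"
  using c_ful[of x y a RB] by (auto simp: points_def)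
lemma c_fBb: "x<y \<Longrightarrow> y<N \<Longrightarrow> a \<in> Req phi RBb (L(x,y)) \<Longrightarrow> \<exists>z. y<z \<and> z<N \<and> a \<in> obs phi (L(x,z))"
  using c_ful[of x y a RBb] by (auto simp: points_def)

lemma row_K: "x<y \<Longrightarrow> y<N \<Longrightarrow> x<z \<Longrightarrow> z<N \<Longrightarrow> K phi (L(x,y)) = K phi (L(x,z))"
proof (cases y z rule: linorder_cases)
  case less
  assume "x<y" "z<N"
  then show ?thesis using c_B[of x y z] less leadsB_K by metis
next
  case greater
  assume "x<z" "y<N"
  then show ?thesis using c_B[of x z y] greater leadsB_K by metis
qed simp

lemma reqA_K: "x<y \<Longrightarrow> y<z \<Longrightarrow> z<N \<Longrightarrow> Req phi RA (L(x,y)) = K phi (L(y,z))"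
  using c_A leadsA_K by blast

end

lemma K_fulfill:
  fixes N :: nat and L :: "nat \<times> nat \<Rightarrow> 'p form set"
  assumes fB: "\<And>x y a. x<y \<Longrightarrow> y<N \<Longrightarrow> a \<in> Req phi RB (L(x,y)) \<Longrightarrow> \<exists>z. x<z \<and> z<y \<and> a \<in> obs phi (L(x,z))"
  and fBb: "\<And>x y a. x<y \<Longrightarrow> y<N \<Longrightarrow> a \<in> Req phi RBb (L(x,y)) \<Longrightarrow> \<exists>z. y<z \<and> z<N \<and> a \<in> obs phi (L(x,z))"
  and xy: "x<y" "y<N" and a: "a \<in> K phi (L(x,y))"
  shows "\<exists>z. x<z \<and> z<N \<and> a \<in> obs phi (L(x,z))"
proof -
  consider "a \<in> obs phi (L(x,y))" | "a \<in> Req phi RB (L(x,y))" | "a \<in> Req phi RBb (L(x,y))"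
    using a unfolding K_def by blast
  then show ?thesis
  proof cases
    case 1 then show ?thesis using xy by blast
  next
    case 2 then obtain z where "x<z" "z<y" "a \<in> obs phi (L(x,z))" using fB[OF xy] by blast
    then show ?thesis using xy by (intro exI[of _ z]) auto
  next
    case 3 then obtain z where "y<z" "z<N" "a \<in> obs phi (L(x,z))" using fBb[OF xy] by blast
    then show ?thesis using xy by (intro exI[of _ z]) auto
  qed
qed

definition mL :: "nat \<Rightarrow> (nat \<Rightarrow> nat \<Rightarrow> 'p set) \<Rightarrow> 'p form \<Rightarrow> nat \<times> nat \<Rightarrow> 'p form set" where
  "mL N \<sigma> phi = (\<lambda>(a,b). {t \<in> ClPlus phi. sat N \<sigma> a b t})"

lemma Req_mL: "Req phi R (mL N \<sigma> phi (x,y)) = {t \<in> Cl phi. sat N \<sigma> x y (Dia R t)}"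
  by (auto simp: Req_def mL_def Dia_ClPlus)

lemma obs_mL: "obs phi (mL N \<sigma> phi (x,y)) = {t \<in> Cl phi. sat N \<sigma> x y t}"
  by (auto simp: obs_def mL_def Cl_ClPlus)

lemma exsplit: "y<z \<Longrightarrow> z<(N::nat) \<Longrightarrow> (\<exists>w. y<w \<and> w<N \<and> P w) \<longleftrightarrow> (P z \<or> (\<exists>w. y<w \<and> w<z \<and> P w) \<or> (\<exists>w. z<w \<and> w<N \<and> P w))"
  by (metis less_trans linorder_neqE_nat)

lemma exsplitB: "x<z' \<Longrightarrow> z'<(z::nat) \<Longrightarrow> (\<exists>w. x<w \<and> w<z \<and> P w) \<longleftrightarrow> (P z' \<or> (\<exists>w. x<w \<and> w<z' \<and> P w) \<or> (\<exists>w. z'<w \<and> w<z \<and> P w))"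
  by (metis less_trans linorder_neqE_nat)

lemma model_compass: "compass phi N (mL N \<sigma> phi)"
proof (rule compassI)
  fix x y :: nat
  show "is_atom phi (mL N \<sigma> phi (x, y))"
    unfolding is_atom_def
  proof (intro conjI allI impI ballI)
    have "norm phi \<in> mL N \<sigma> phi (x, y) \<or> neg (norm phi) \<in> mL N \<sigma> phi (x, y)"
      using Cl_ClPlus[OF normphi_Cl[of phi]] Cl_ClPlus[OF Cl_neg[OF normphi_Cl[of phi]]]
      by (auto simp: mL_def sat_neg)
    then show "mL N \<sigma> phi (x, y) \<noteq> {}" by blast
    show "mL N \<sigma> phi (x, y) \<subseteq> ClPlus phi" by (auto simp: mL_def)
  next
    fix a assume "a \<in> ClPlus phi"
    then show "(a \<in> mL N \<sigma> phi (x, y)) = (neg a \<notin> mL N \<sigma> phi (x, y))"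
      using ClPlus_neg[of a phi] by (auto simp: mL_def sat_neg)
  next
    fix a b assume "Or a b \<in> ClPlus phi"
    then show "(Or a b \<in> mL N \<sigma> phi (x, y)) = (a \<in> mL N \<sigma> phi (x, y) \<or> b \<in> mL N \<sigma> phi (x, y))"
      using ClPlus_Or[of a b phi] Cl_ClPlus by (auto simp: mL_def)
  qed
next
  fix x y z :: nat assume h: "x<y" "y<z" "z<N"
  show "leadsA phi (mL N \<sigma> phi (x, y)) (mL N \<sigma> phi (y, z))"
    unfolding leadsA_def Req_mL obs_mL
    apply (rule set_eqI)
    apply (simp only: mem_Collect_eq Un_iff sat.simps)
    apply (subst exsplit[of y z N, OF h(2,3)])
    apply blast
    done
next
  fix x z z' :: nat assume h: "x<z'" "z'<z" "z<N"
  show "leadsB phi (mL N \<sigma> phi (x, z)) (mL N \<sigma> phi (x, z'))"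
    unfolding leadsB_def Req_mL obs_mL
    apply (simp only: sat.simps)
    apply (intro conjI)
    subgoal apply (rule subsetI) apply (simp only: mem_Collect_eq Un_iff)
      using h(2,3) by (meson less_trans)
    subgoal apply (rule subsetI) apply (simp only: mem_Collect_eq Un_iff)
      apply (subst (asm) exsplit[of z' z N, OF h(2,3)]) using h by (meson less_trans)
    subgoal apply (rule subsetI) apply (simp only: mem_Collect_eq Un_iff)
      using h(1,2) by (meson less_trans)
    subgoal apply (rule subsetI) apply (simp only: mem_Collect_eq Un_iff)
      apply (subst (asm) exsplitB[of x z' z, OF h(1,2)]) using h by (meson less_trans)
    done
next
  fix x y a assume "x<y" "y<N" "a \<in> Req phi RA (mL N \<sigma> phi (x, y))"
  then show "\<exists>z. y<z \<and> z<N \<and> a \<in> obs phi (mL N \<sigma> phi (y, z))"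
    unfolding Req_mL obs_mL by auto
next
  fix x y a assume "x<y" "y<N" "a \<in> Req phi RB (mL N \<sigma> phi (x, y))"
  then show "\<exists>z. x<z \<and> z<y \<and> a \<in> obs phi (mL N \<sigma> phi (x, z))"
    unfolding Req_mL obs_mL by auto
next
  fix x y a assume "x<y" "y<N" "a \<in> Req phi RBb (mL N \<sigma> phi (x, y))"
  then show "\<exists>z. y<z \<and> z<N \<and> a \<in> obs phi (mL N \<sigma> phi (x, z))"
    unfolding Req_mL obs_mL by auto
qed

lemma truth:
  assumes C: "compass phi N L"
  shows "t \<in> Cl phi \<Longrightarrow> x<y \<Longrightarrow> y<N \<Longrightarrow>
     sat N (\<lambda>a b. {v. Var v \<in> L(a,b)}) x y t \<longleftrightarrow> t \<in> L(x,y)"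
proof (induction t arbitrary: x y)
  case (Var p) then show ?case by simp
next
  case (Neg c)
  have c: "c \<in> Cl phi" using Cl_Neg Neg.prems by blast
  have at: "is_atom phi (L(x,y))" using c_atom[OF C] Neg.prems by blast
  have "Neg c \<in> ClPlus phi" using Neg.prems Cl_ClPlus by blast
  then have "Neg c \<in> L(x,y) \<longleftrightarrow> c \<notin> L(x,y)" using at unfolding is_atom_def by force
  then show ?case using Neg.IH[OF c] Neg.prems by simp
next
  case (Or a b)
  have ab: "a \<in> Cl phi" "b \<in> Cl phi" using Cl_Or Or.prems by blast+
  have at: "is_atom phi (L(x,y))" using c_atom[OF C] Or.prems by blast
  have "Or a b \<in> ClPlus phi" using Or.prems Cl_ClPlus by blast
  then have "Or a b \<in> L(x,y) \<longleftrightarrow> a \<in> L(x,y) \<or> b \<in> L(x,y)" using at unfolding is_atom_def by blast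
  then show ?case using Or.IH ab Or.prems by simp
next
  case (Dia R c)
  have c: "c \<in> Cl phi" using Cl_Dia Dia.prems by blast
  have req: "Dia R c \<in> L(x,y) \<longleftrightarrow> c \<in> Req phi R (L(x,y))" using c by (simp add: Req_def)
  have obs: "\<And>p. c \<in> obs phi (L p) \<longleftrightarrow> c \<in> L p" using c by (simp add: obs_def)
  show ?case
  proof (cases R)
    case RA
    have "(\<exists>z. y<z \<and> z<N \<and> c \<in> L(y,z)) \<longleftrightarrow> c \<in> Req phi RA (L(x,y))"
    proof
      assume "\<exists>z. y<z \<and> z<N \<and> c \<in> L(y,z)"
      then obtain z where "y<z" "z<N" "c \<in> L(y,z)" by blast
      then show "c \<in> Req phi RA (L(x,y))" using reqA_K[OF C, of x y z] Dia.prems obs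
        unfolding K_def by blast
    next
      assume "c \<in> Req phi RA (L(x,y))"
      then show "\<exists>z. y<z \<and> z<N \<and> c \<in> L(y,z)" using c_fA[OF C] Dia.prems obs by blast
    qed
    moreover have "\<And>z. y<z \<Longrightarrow> z<N \<Longrightarrow> sat N (\<lambda>a b. {v. Var v \<in> L(a,b)}) y z c \<longleftrightarrow> c \<in> L(y,z)"
      using Dia.IH c by blast
    ultimately show ?thesis using RA req by auto
  next
    case RB
    have "(\<exists>z. x<z \<and> z<y \<and> c \<in> L(x,z)) \<longleftrightarrow> c \<in> Req phi RB (L(x,y))"
    proof
      assume "\<exists>z. x<z \<and> z<y \<and> c \<in> L(x,z)"
      then obtain z where "x<z" "z<y" "c \<in> L(x,z)" by blast
      then show "c \<in> Req phi RB (L(x,y))" using c_B[OF C, of x z y] Dia.prems obs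
        unfolding leadsB_def by blast
    next
      assume "c \<in> Req phi RB (L(x,y))"
      then show "\<exists>z. x<z \<and> z<y \<and> c \<in> L(x,z)" using c_fB[OF C] Dia.prems obs by blast
    qed
    moreover have "\<And>z. x<z \<Longrightarrow> z<y \<Longrightarrow> sat N (\<lambda>a b. {v. Var v \<in> L(a,b)}) x z c \<longleftrightarrow> c \<in> L(x,z)"
      using Dia.IH c Dia.prems by auto
    ultimately show ?thesis using RB req by auto
  next
    case RBb
    have "(\<exists>z. y<z \<and> z<N \<and> c \<in> L(x,z)) \<longleftrightarrow> c \<in> Req phi RBb (L(x,y))"
    proof
      assume "\<exists>z. y<z \<and> z<N \<and> c \<in> L(x,z)"
      then obtain z where "y<z" "z<N" "c \<in> L(x,z)" by blast
      then show "c \<in> Req phi RBb (L(x,y))" using c_B[OF C, of x y z] Dia.prems obs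
        unfolding leadsB_def by blast
    next
      assume "c \<in> Req phi RBb (L(x,y))"
      then show "\<exists>z. y<z \<and> z<N \<and> c \<in> L(x,z)" using c_fBb[OF C] Dia.prems obs by blast
    qed
    moreover have "\<And>z. y<z \<Longrightarrow> z<N \<Longrightarrow> sat N (\<lambda>a b. {v. Var v \<in> L(a,b)}) x z c \<longleftrightarrow> c \<in> L(x,z)"
      using Dia.IH c Dia.prems by auto
    ultimately show ?thesis using RBb req by auto
  qed
qed

lemma shift:
  assumes C: "compass phi N L"
  shows "compass phi (N - x0) (\<lambda>(a,b). L(a+x0, b+x0))"
proof (rule compassI)
  fix x y :: nat assume "x<y" "y<N-x0"
  then show "is_atom phi ((\<lambda>(a,b). L(a+x0, b+x0)) (x,y))" using c_atom[OF C] by simp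
next
  fix x y z :: nat assume "x<y" "y<z" "z<N-x0"
  then show "leadsA phi ((\<lambda>(a,b). L(a+x0, b+x0)) (x,y)) ((\<lambda>(a,b). L(a+x0, b+x0)) (y,z))"
    using c_A[OF C] by simp
next
  fix x z z' :: nat assume "x<z'" "z'<z" "z<N-x0"
  then show "leadsB phi ((\<lambda>(a,b). L(a+x0, b+x0)) (x,z)) ((\<lambda>(a,b). L(a+x0, b+x0)) (x,z'))"
    using c_B[OF C] by simp
next
  fix x y a assume h: "x<y" "y<N-x0" "a \<in> Req phi RA ((\<lambda>(a,b). L(a+x0, b+x0)) (x,y))"
  then obtain z where "y+x0<z" "z<N" "a \<in> obs phi (L(y+x0,z))" using c_fA[OF C, of "x+x0" "y+x0" a] h(1,3) less_diff_conv[of y N x0] h(2) by auto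
  then show "\<exists>z. y<z \<and> z<N-x0 \<and> a \<in> obs phi ((\<lambda>(a,b). L(a+x0, b+x0)) (y,z))"
    by (intro exI[of _ "z-x0"]) auto
next
  fix x y a assume h: "x<y" "y<N-x0" "a \<in> Req phi RB ((\<lambda>(a,b). L(a+x0, b+x0)) (x,y))"
  then obtain z where "x+x0<z" "z<y+x0" "a \<in> obs phi (L(x+x0,z))" using c_fB[OF C, of "x+x0" "y+x0" a] h(1,3) less_diff_conv[of y N x0] h(2) by auto
  then show "\<exists>z. x<z \<and> z<y \<and> a \<in> obs phi ((\<lambda>(a,b). L(a+x0, b+x0)) (x,z))"
    by (intro exI[of _ "z-x0"]) auto
next
  fix x y a assume h: "x<y" "y<N-x0" "a \<in> Req phi RBb ((\<lambda>(a,b). L(a+x0, b+x0)) (x,y))"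
  then obtain z where "y+x0<z" "z<N" "a \<in> obs phi (L(x+x0,z))" using c_fBb[OF C, of "x+x0" "y+x0" a] h(1,3) less_diff_conv[of y N x0] h(2) by auto
  then show "\<exists>z. y<z \<and> z<N-x0 \<and> a \<in> obs phi ((\<lambda>(a,b). L(a+x0, b+x0)) (x,z))"
    by (intro exI[of _ "z-x0"]) auto
qed

lemma cut:
  fixes L :: "nat \<times> nat \<Rightarrow> 'p form set"
  assumes C: "compass phi N L" and y1: "1 \<le> y" and yy: "y < y'" "y' < N"
  and col: "(\<lambda>x. L(x,y)) ` {..<y} = (\<lambda>x. L(x,y')) ` {..<y'}"
  shows "\<exists>L'. compass phi (N - (y'-y)) L' \<and>
     (\<forall>b z. 0 < b \<longrightarrow> b < N - (y'-y) \<longrightarrow> 0 < z \<longrightarrow> z < N \<longrightarrow> K phi (L'(0,b)) = K phi (L(0,z)))"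
proof -
  define d where "d = y' - y"
  define N' where "N' = N - d"
  have y'd: "y' = y + d" using yy d_def by simp
  have yN': "y < N'" using yy y'd N'_def by simp
  define xs where "xs = (\<lambda>a. SOME x. x < y' \<and> L(x,y') = L(a,y))"
  have xs: "xs a < y' \<and> L(xs a, y') = L(a,y)" if "a < y" for a
  proof -
    have "L(a,y) \<in> (\<lambda>x. L(x,y')) ` {..<y'}" using col that by blast
    then have "\<exists>x. x < y' \<and> L(x,y') = L(a,y)" by auto
    then show ?thesis unfolding xs_def by (rule someI_ex)
  qed
  define L' where "L' = (\<lambda>(a,b). if y \<le> a then L(a+d, b+d) else if b < y then L(a,b) else L(xs a, b+d))"
  define pos where "pos = (\<lambda>b. if b < y then b else b + d)"
  define rho where "rho = (\<lambda>a b. if y \<le> a then a+d else if b < y then a else xs a)"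
  have rep: "L'(a,b) = L(rho a b, pos b) \<and> rho a b < pos b \<and> pos b < N" if "a<b" "b<N'" for a b
  proof (cases "y \<le> a")
    case True then show ?thesis using that N'_def by (simp add: L'_def rho_def pos_def)
  next
    case False
    show ?thesis
    proof (cases "b < y")
      case True then show ?thesis using that False N'_def yy by (simp add: L'_def rho_def pos_def)
    next
      case F2: False
      then show ?thesis using that False N'_def xs[of a] y'd by (simp add: L'_def rho_def pos_def)
    qed
  qed
  have posmono: "pos a < pos b" if "a<b" for a b using that by (simp add: pos_def)
  have F2: "K phi (L'(a,b)) = K phi (L(pos a, z))" if "a<b" "b<N'" "pos a < z" "z < N" for a b z
  proof (cases "y \<le> a")
    case True then show ?thesis using that N'_def row_K[OF C, of "a+d" "b+d" z] by (simp add: L'_def pos_def)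
  next
    case False
    show ?thesis
    proof (cases "b < y")
      case True then show ?thesis using that False yy row_K[OF C, of a b z] by (simp add: L'_def pos_def)
    next
      case F2: False
      have "K phi (L'(a,b)) = K phi (L(xs a, b+d))" using False F2 by (simp add: L'_def)
      also have "\<dots> = K phi (L(xs a, y'))" using row_K[OF C, of "xs a" "b+d" y'] xs[of a] False F2 that N'_def y'd yy
        by simp
      also have "\<dots> = K phi (L(a, y))" using xs[of a] False by simp
      also have "\<dots> = K phi (L(a, z))" using row_K[OF C, of a y z] False that yy by (simp add: pos_def)
      finally show ?thesis using False by (simp add: pos_def)
    qed
  qed
  have F3: "Req phi RA (L'(a,b)) = K phi (L(pos b, z))" if "a<b" "b<N'" "pos b < z" "z < N" for a b z
    using rep[OF that(1,2)] reqA_K[OF C, of "rho a b" "pos b" z] that by simp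
  have at: "is_atom phi (L'(a,b))" if "a<b" "b<N'" for a b
    using rep[OF that] c_atom[OF C] by simp
  have cA: "leadsA phi (L'(a,b)) (L'(b,c))" if "a<b" "b<c" "c<N'" for a b c
  proof -
    have "pos b < pos c" "pos c < N" using posmono that rep[of b c] by auto
    then show ?thesis unfolding leadsA_K using F2[of b c "pos c"] F3[of a b "pos c"] that by simp
  qed
  have cB: "leadsB phi (L'(a,b)) (L'(a,b'))" if h: "a<b'" "b'<b" "b<N'" for a b b'
  proof (cases "y \<le> a")
    case True
    have "L'(a,b) = L(a+d,b+d)" "L'(a,b') = L(a+d,b'+d)" using True by (simp_all add: L'_def)
    moreover have "leadsB phi (L(a+d,b+d)) (L(a+d,b'+d))"
      by (rule c_B[OF C]) (use h N'_def in simp_all)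
    ultimately show ?thesis by simp
  next
    case False
    show ?thesis
    proof (cases "b < y")
      case True
      have "L'(a,b) = L(a,b)" "L'(a,b') = L(a,b')" using True False h by (simp_all add: L'_def)
      moreover have "leadsB phi (L(a,b)) (L(a,b'))"
        by (rule c_B[OF C]) (use h True yy in simp_all)
      ultimately show ?thesis by simp
    next
      case F2: False
      have xa: "xs a < y'" "L(xs a, y') = L(a,y)" using xs[of a] False by simp_all
      have e2: "L'(a,b) = L(xs a,b+d)" using F2 False by (simp add: L'_def)
      show ?thesis
      proof (cases "y \<le> b'")
        case True
        have "L'(a,b') = L(xs a,b'+d)" using True False by (simp add: L'_def)
        moreover have "leadsB phi (L(xs a,b+d)) (L(xs a,b'+d))"
          by (rule c_B[OF C]) (use h True xa y'd N'_def in simp_all)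
        ultimately show ?thesis using e2 by simp
      next
        case F3: False
        have e1: "L'(a,b') = L(a,b')" using F3 False by (simp add: L'_def)
        have l1: "leadsB phi (L(a,y)) (L(a,b'))"
          by (rule c_B[OF C]) (use h F3 yy in simp_all)
        show ?thesis
        proof (cases "b = y")
          case True
          then have "L'(a,b) = L(a,y)" using e2 xa y'd by simp
          then show ?thesis using e1 l1 by simp
        next
          case False2: False
          have l2: "leadsB phi (L(xs a, b+d)) (L(xs a, y'))"
            by (rule c_B[OF C]) (use xa False2 F2 h N'_def y'd in simp_all)
          have "leadsB phi (L(xs a, b+d)) (L(a,b'))"
            using leadsB_trans[OF l2[unfolded xa(2)] l1] .
          then show ?thesis using e1 e2 by simp
        qed
      qed
    qed
  qed
  have fB: "\<exists>c. a<c \<and> c<b \<and> al \<in> obs phi (L'(a,c))"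
    if h: "a<b" "b<N'" "al \<in> Req phi RB (L'(a,b))" for a b al
  proof (cases "y \<le> a")
    case True
    have "al \<in> Req phi RB (L(a+d,b+d))" using h(3) True by (simp add: L'_def)
    moreover have "a+d < b+d" "b+d < N" using h N'_def by simp_all
    ultimately obtain z where z: "a+d < z" "z < b+d" "al \<in> obs phi (L(a+d,z))"
      using c_fB[OF C] by blast
    have "L'(a,z-d) = L(a+d,z)" using True z by (simp add: L'_def)
    moreover have "a < z-d" "z-d < b" using z by simp_all
    ultimately show ?thesis using z by metis
  next
    case False
    show ?thesis
    proof (cases "b < y")
      case True
      have "al \<in> Req phi RB (L(a,b))" using h(3) True False by (simp add: L'_def)
      moreover have "b < N" using True yy by simp
      ultimately obtain z where z: "a < z" "z < b" "al \<in> obs phi (L(a,z))"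
        using c_fB[OF C] h(1) by blast
      have "L'(a,z) = L(a,z)" using True False z by (simp add: L'_def)
      then show ?thesis using z by metis
    next
      case F2: False
      have xa: "xs a < y'" "L(xs a, y') = L(a,y)" using xs[of a] False by simp_all
      have "al \<in> Req phi RB (L(xs a,b+d))" using h(3) F2 False by (simp add: L'_def)
      moreover have "xs a < b+d" "b+d < N" using xa F2 y'd h N'_def by simp_all
      ultimately obtain z where z: "xs a < z" "z < b+d" "al \<in> obs phi (L(xs a,z))"
        using c_fB[OF C] by blast
      show ?thesis
      proof (cases "y' \<le> z")
        case True
        have "y \<le> z-d" using True y'd by simp
        then have "L'(a,z-d) = L(xs a,z)" using True False y'd by (simp add: L'_def)
        moreover have "a < z-d" "z-d < b" using z True False y'd by simp_all
        ultimately show ?thesis using z by metis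
      next
        case False2: False
        have "leadsB phi (L(xs a, y')) (L(xs a, z))"
          by (rule c_B[OF C]) (use z False2 yy in simp_all)
        then have "al \<in> Req phi RB (L(xs a, y'))" using z unfolding leadsB_def by blast
        then have "al \<in> Req phi RB (L(a, y))" using xa by simp
        then obtain w where w: "a < w" "w < y" "al \<in> obs phi (L(a,w))"
          using c_fB[OF C, of a y al] False yy by auto
        have "L'(a,w) = L(a,w)" using w False by (simp add: L'_def)
        moreover have "w < b" using w F2 by simp
        ultimately show ?thesis using w by metis
      qed
    qed
  qed
  have fBb: "\<exists>c. b<c \<and> c<N' \<and> al \<in> obs phi (L'(a,c))"
    if h: "a<b" "b<N'" "al \<in> Req phi RBb (L'(a,b))" for a b al
  proof (cases "y \<le> a")
    case True
    have "al \<in> Req phi RBb (L(a+d,b+d))" using h(3) True by (simp add: L'_def)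
    moreover have "a+d < b+d" "b+d < N" using h N'_def by simp_all
    ultimately obtain z where z: "b+d < z" "z < N" "al \<in> obs phi (L(a+d,z))"
      using c_fBb[OF C] by blast
    have "L'(a,z-d) = L(a+d,z)" using True z h by (simp add: L'_def)
    moreover have "b < z-d" "z-d < N'" using z N'_def by simp_all
    ultimately show ?thesis using z by metis
  next
    case False
    have xa: "xs a < y'" "L(xs a, y') = L(a,y)" using xs[of a] False by simp_all
    show ?thesis
    proof (cases "b < y")
      case F2: False
      have "al \<in> Req phi RBb (L(xs a,b+d))" using h(3) F2 False by (simp add: L'_def)
      moreover have "xs a < b+d" "b+d < N" using xa F2 y'd h N'_def by simp_all
      ultimately obtain z where z: "b+d < z" "z < N" "al \<in> obs phi (L(xs a,z))"
        using c_fBb[OF C] by blast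
      have "y \<le> z-d" using F2 z by simp
      then have "L'(a,z-d) = L(xs a,z)" using F2 False z by (simp add: L'_def)
      moreover have "b < z-d" "z-d < N'" using z N'_def by simp_all
      ultimately show ?thesis using z by metis
    next
      case True
      have "al \<in> Req phi RBb (L(a,b))" using h(3) True False by (simp add: L'_def)
      moreover have "b < N" using True yy by simp
      ultimately obtain z where z: "b < z" "z < N" "al \<in> obs phi (L(a,z))"
        using c_fBb[OF C] h(1) by blast
      show ?thesis
      proof (cases z y rule: linorder_cases)
        case less
        have "L'(a,z) = L(a,z)" using less False by (simp add: L'_def)
        moreover have "z < N'" using less yN' by simp
        ultimately show ?thesis using z by metis
      next
        case equal
        have "L'(a,y) = L(xs a, y')" using False y'd by (simp add: L'_def)
        then have "L'(a,y) = L(a,z)" using xa equal by simp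
        then show ?thesis using z equal yN' by metis
      next
        case greater
        have "leadsB phi (L(a, z)) (L(a, y))"
          by (rule c_B[OF C]) (use z greater False in simp_all)
        then have "al \<in> Req phi RBb (L(a, y))" using z unfolding leadsB_def by blast
        then have "al \<in> Req phi RBb (L(xs a, y'))" using xa by simp
        then obtain w where w: "y' < w" "w < N" "al \<in> obs phi (L(xs a,w))"
          using c_fBb[OF C, of "xs a" y' al] xa yy by auto
        have "y \<le> w-d" using w y'd by simp
        then have "L'(a,w-d) = L(xs a,w)" using False w y'd by (simp add: L'_def)
        moreover have "b < w-d" "w-d < N'" using w True y'd N'_def by simp_all
        ultimately show ?thesis using w by metis
      qed
    qed
  qed
  have fA: "\<exists>c. b<c \<and> c<N' \<and> al \<in> obs phi (L'(b,c))"
    if h: "a<b" "b<N'" "al \<in> Req phi RA (L'(a,b))" for a b al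
  proof -
    have r: "L'(a,b) = L(rho a b, pos b)" "rho a b < pos b" "pos b < N" using rep[OF h(1,2)] by auto
    obtain z where z: "pos b < z" "z < N" "al \<in> obs phi (L(pos b,z))"
      using c_fA[OF C, of "rho a b" "pos b" al] r h(3) by auto
    have bN: "b < N' - 1"
    proof (cases "b < y")
      case True then show ?thesis using yN' y'd N'_def yy by simp
    next
      case False then show ?thesis using z N'_def by (simp add: pos_def)
    qed
    then have "K phi (L'(b, N'-1)) = K phi (L(pos b, z))" using F2[of b "N'-1" z] z by simp
    then have "al \<in> K phi (L'(b, N'-1))" using z unfolding K_def by blast
    then show ?thesis using K_fulfill[of N' phi L' b "N'-1" al, OF fB fBb] bN by auto
  qed
  have comp: "compass phi N' L'"
    by (rule compassI[OF at cA cB fA fB fBb])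
  have feat: "K phi (L'(0,b)) = K phi (L(0,z))" if "0<b" "b<N'" "0<z" "z<N" for b z
    using F2[of 0 b z] that y1 by (simp add: pos_def)
  show ?thesis using comp feat N'_def d_def by blast
qed

lemma UNIV_rel: "(UNIV :: rel set) = {RA, RB, RBb}"
  using rel.exhaust by auto

lemma finite_Cl: "finite (Cl phi)"
  unfolding Cl_def using finite_subs by auto

lemma finite_ClPlus: "finite (ClPlus phi)"
proof -
  have "ClPlus phi \<subseteq> Cl phi \<union> (\<lambda>(R,a). Dia R a) ` (UNIV \<times> Cl phi) \<union> (\<lambda>(R,a). Neg (Dia R a)) ` (UNIV \<times> Cl phi)"
    unfolding ClPlus_def by auto
  moreover have "finite (UNIV :: rel set)" by (simp add: UNIV_rel)
  then have "finite ((UNIV :: rel set) \<times> Cl phi)" using finite_Cl[of phi] by (rule finite_cartesian_product)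
  ultimately show ?thesis using finite_Cl finite_subset by blast
qed

definition atoms :: "'p form \<Rightarrow> 'p form set set" where
  "atoms phi = {F. is_atom phi F}"

definition Bset :: "'p form \<Rightarrow> 'p form set" where
  "Bset phi = {t \<in> ClPlus phi. \<forall>c. t \<noteq> Neg c}"

lemma finite_atoms: "finite (atoms phi)"
proof -
  have "atoms phi \<subseteq> Pow (ClPlus phi)" by (auto simp: atoms_def is_atom_def)
  then show ?thesis using finite_ClPlus finite_subset by blast
qed

lemma atom_sub: "is_atom phi F \<Longrightarrow> F \<subseteq> ClPlus phi"
  by (simp add: is_atom_def)

lemma atom_cons: "is_atom phi F \<Longrightarrow> a \<in> ClPlus phi \<Longrightarrow> a \<in> F \<longleftrightarrow> neg a \<notin> F"
  by (simp add: is_atom_def)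

lemma atom_eq:
  assumes F: "is_atom phi F" and G: "is_atom phi G" and e: "F \<inter> Bset phi = G \<inter> Bset phi"
  shows "F = G"
proof -
  have FS: "F \<subseteq> ClPlus phi" and GS: "G \<subseteq> ClPlus phi" using atom_sub F G by auto
  have nonneg: "t \<in> F \<longleftrightarrow> t \<in> G" if nn: "\<forall>c. t \<noteq> Neg c" for t
  proof -
    have "t \<in> F \<longleftrightarrow> t \<in> F \<inter> Bset phi" using FS nn unfolding Bset_def by blast
    moreover have "t \<in> G \<longleftrightarrow> t \<in> G \<inter> Bset phi" using GS nn unfolding Bset_def by blast
    ultimately show ?thesis using e by blast
  qed
  have "t \<in> F \<longleftrightarrow> t \<in> G" for t
  proof (induction t)
    case (Neg c)
    show ?case
    proof (cases "Neg c \<in> ClPlus phi")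
      case True
      have "Neg c \<in> F \<longleftrightarrow> c \<notin> F" using atom_cons[OF F True] by simp
      moreover have "Neg c \<in> G \<longleftrightarrow> c \<notin> G" using atom_cons[OF G True] by simp
      ultimately show ?thesis using Neg.IH by simp
    next
      case False then show ?thesis using FS GS by blast
    qed
  qed (rule nonneg; simp)+
  then show ?thesis by blast
qed

lemma card_atoms_B: "card (atoms phi) \<le> 2 ^ card (Bset phi)"
proof -
  have fB: "finite (Bset phi)" by (rule finite_subset[OF _ finite_ClPlus]) (auto simp: Bset_def)
  have "inj_on (\<lambda>F. F \<inter> Bset phi) (atoms phi)"
    using atom_eq unfolding inj_on_def atoms_def by blast
  moreover have "(\<lambda>F. F \<inter> Bset phi) ` atoms phi \<subseteq> Pow (Bset phi)" by auto
  ultimately have "card (atoms phi) \<le> card (Pow (Bset phi))"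
    using card_inj_on_le fB by blast
  moreover have "card (Pow (Bset phi)) = 2 ^ card (Bset phi)" by (rule card_Pow[OF fB])
  ultimately show ?thesis by linarith
qed

definition Snn :: "'p form \<Rightarrow> 'p form set" where
  "Snn phi = {x \<in> subs phi. \<forall>c. x \<noteq> Neg c}"

lemma norm_nonNeg: "(\<forall>c. y \<noteq> Neg c) \<Longrightarrow> (\<forall>c. norm y \<noteq> Neg c)"
  by (cases y) auto

lemma normform: "x \<in> subs phi \<Longrightarrow> \<exists>y\<in>Snn phi. norm x = norm y \<or> norm x = Neg (norm y)"
proof (induction x)
  case (Neg x)
  have "x \<in> subs phi" using subs_trans[OF Neg.prems] subs_self[of x] by auto
  then obtain y where y: "y \<in> Snn phi" "norm x = norm y \<or> norm x = Neg (norm y)" using Neg.IH by blast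
  have nn: "\<forall>c. norm y \<noteq> Neg c" using y(1) norm_nonNeg unfolding Snn_def by blast
  show ?case
  proof (cases "norm x = norm y")
    case True then show ?thesis using y(1) neg_nonNeg[OF nn] by auto
  next
    case False then show ?thesis using y by auto
  qed
qed (auto simp: Snn_def)

lemma Cl_sub: "Cl phi \<subseteq> norm ` Snn phi \<union> Neg ` norm ` Snn phi"
proof
  fix t assume "t \<in> Cl phi"
  then obtain x where x: "x \<in> subs phi" "t = norm x \<or> t = neg (norm x)" by (auto simp: Cl_def)
  obtain y where y: "y \<in> Snn phi" "norm x = norm y \<or> norm x = Neg (norm y)" using normform[OF x(1)] by blast
  have nn: "\<forall>c. norm y \<noteq> Neg c" using y(1) norm_nonNeg unfolding Snn_def by blast
  show "t \<in> norm ` Snn phi \<union> Neg ` norm ` Snn phi"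
    using x(2) y neg_nonNeg[OF nn] by auto
qed

lemma B_sub: "Bset phi \<subseteq> norm ` Snn phi \<union> (Dia RA ` Cl phi \<union> Dia RB ` Cl phi \<union> Dia RBb ` Cl phi)"
proof
  fix t assume t: "t \<in> Bset phi"
  then have nn: "\<forall>c. t \<noteq> Neg c" and tc: "t \<in> ClPlus phi" by (auto simp: Bset_def)
  show "t \<in> norm ` Snn phi \<union> (Dia RA ` Cl phi \<union> Dia RB ` Cl phi \<union> Dia RBb ` Cl phi)"
  proof (cases "t \<in> Cl phi")
    case True then show ?thesis using Cl_sub nn by blast
  next
    case False
    then have "t \<in> {Dia R a | R a. a \<in> Cl phi} \<or> t \<in> {neg (Dia R a) | R a. a \<in> Cl phi}"
      using tc unfolding ClPlus_def by blast
    moreover have "t \<notin> {neg (Dia R a) | R a. a \<in> Cl phi}" using nn by auto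
    ultimately obtain R a where "a \<in> Cl phi" "t = Dia R a" by blast
    then show ?thesis by (cases R) auto
  qed
qed

lemma card_B: "card (Bset phi) \<le> 7 * fsize phi"
proof -
  have fS: "finite (Snn phi)" by (rule finite_subset[OF _ finite_subs]) (auto simp: Snn_def)
  have cS: "card (Snn phi) \<le> fsize phi" unfolding fsize_def Snn_def
    by (rule card_mono[OF finite_subs]) auto
  have c1: "card (norm ` Snn phi) \<le> card (Snn phi)" by (rule card_image_le[OF fS])
  have c2: "card (Neg ` norm ` Snn phi) \<le> card (Snn phi)"
    using card_image_le[OF finite_imageI[OF fS, of norm], of Neg] c1 by linarith
  have cCl: "card (Cl phi) \<le> 2 * card (Snn phi)"
  proof -
    have "card (Cl phi) \<le> card (norm ` Snn phi \<union> Neg ` norm ` Snn phi)"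
      by (rule card_mono) (use Cl_sub fS in auto)
    also have "\<dots> \<le> card (norm ` Snn phi) + card (Neg ` norm ` Snn phi)" by (rule card_Un_le)
    finally show ?thesis using c1 c2 by linarith
  qed
  have d: "\<And>R. card (Dia R ` Cl phi) \<le> card (Cl phi)" by (rule card_image_le[OF finite_Cl])
  have "card (Bset phi) \<le> card (norm ` Snn phi \<union> (Dia RA ` Cl phi \<union> Dia RB ` Cl phi \<union> Dia RBb ` Cl phi))"
    by (rule card_mono) (use B_sub fS finite_Cl in auto)
  also have "\<dots> \<le> card (norm ` Snn phi) + (card (Dia RA ` Cl phi) + card (Dia RB ` Cl phi) + card (Dia RBb ` Cl phi))"
  proof -
    have "card (Dia RA ` Cl phi \<union> Dia RB ` Cl phi \<union> Dia RBb ` Cl phi) \<le> card (Dia RA ` Cl phi \<union> Dia RB ` Cl phi) + card (Dia RBb ` Cl phi)"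
      by (rule card_Un_le)
    moreover have "card (Dia RA ` Cl phi \<union> Dia RB ` Cl phi) \<le> card (Dia RA ` Cl phi) + card (Dia RB ` Cl phi)"
      by (rule card_Un_le)
    moreover have "card (norm ` Snn phi \<union> (Dia RA ` Cl phi \<union> Dia RB ` Cl phi \<union> Dia RBb ` Cl phi)) \<le> card (norm ` Snn phi) + card (Dia RA ` Cl phi \<union> Dia RB ` Cl phi \<union> Dia RBb ` Cl phi)"
      by (rule card_Un_le)
    ultimately show ?thesis by linarith
  qed
  finally show ?thesis using c1 cS cCl d[of RA] d[of RB] d[of RBb] by linarith
qed

lemma card_atoms: "card (atoms phi) \<le> 2 ^ (7 * fsize phi)"
proof -
  have "(2::nat) ^ card (Bset phi) \<le> 2 ^ (7 * fsize phi)"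
    by (rule power_increasing[OF card_B]) simp
  then show ?thesis using card_atoms_B order_trans by blast
qed


lemma small:
  "compass phi N L \<Longrightarrow> 0 < y0 \<Longrightarrow> y0 < N \<Longrightarrow> norm phi \<in> L(0,y0) \<Longrightarrow>
   \<exists>N' L'. N' \<le> 2 ^ card (atoms phi) \<and> compass phi N' L' \<and> features phi N' L' (norm phi)"
proof (induction N arbitrary: L y0 rule: less_induct)
  case (less N)
  note C = less.prems(1)
  show ?case
  proof (cases "N \<le> 2 ^ card (atoms phi)")
    case True
    have "(0,y0) \<in> points N" using less.prems by (simp add: points_def)
    then have "features phi N L (norm phi)" using less.prems(4) unfolding features_def by blast
    then show ?thesis using True C by blast
  next
    case False
    define Col where "Col = (\<lambda>y. (\<lambda>x. L(x,y)) ` {..<y})"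
    have sub: "Col ` {..<N} \<subseteq> Pow (atoms phi)"
    proof
      fix S assume "S \<in> Col ` {..<N}"
      then obtain y where y: "y < N" "S = Col y" by auto
      have "\<And>x. x < y \<Longrightarrow> L(x,y) \<in> atoms phi" using c_atom[OF C] y(1) by (simp add: atoms_def)
      then show "S \<in> Pow (atoms phi)" using y(2) unfolding Col_def by auto
    qed
    have "\<not> inj_on Col {..<N}"
    proof
      assume "inj_on Col {..<N}"
      then have "card {..<N} \<le> card (Pow (atoms phi))"
        using card_inj_on_le sub finite_atoms by blast
      then show False using False card_Pow[OF finite_atoms[of phi]] by simp
    qed
    then obtain i j where ij0: "i < N" "j < N" "i \<noteq> j" "Col i = Col j"
      unfolding inj_on_def by auto
    obtain i j where ij: "i < j" "j < N" "Col i = Col j"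
    proof (cases "i < j")
      case True then show ?thesis using ij0 that by blast
    next
      case False then show ?thesis using ij0 that[of j i] by auto
    qed
    have "i \<noteq> 0"
    proof
      assume "i = 0"
      then have "Col j = {}" using ij(3) by (simp add: Col_def)
      moreover have "L(0,j) \<in> Col j" using ij(1) \<open>i = 0\<close> by (auto simp: Col_def)
      ultimately show False by simp
    qed
    then have i1: "1 \<le> i" by simp
    obtain L' where L': "compass phi (N - (j-i)) L'"
      and feat: "\<forall>b z. 0 < b \<longrightarrow> b < N - (j-i) \<longrightarrow> 0 < z \<longrightarrow> z < N \<longrightarrow> K phi (L'(0,b)) = K phi (L(0,z))"
      using cut[OF C i1 ij(1,2)] ij(3) unfolding Col_def by blast
    define N' where "N' = N - (j-i)"
    have N'lt: "N' < N" using ij N'_def by simp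
    have N'1: "0 < N' - 1" using ij i1 N'_def by simp
    have "norm phi \<in> K phi (L(0,y0))" using less.prems(4) normphi_Cl unfolding K_def obs_def by blast
    then have "norm phi \<in> K phi (L'(0,N'-1))" using feat less.prems N'1 N'_def by auto
    then obtain z where z: "0 < z" "z < N'" "norm phi \<in> obs phi (L'(0,z))"
      using K_fulfill[of N' phi L' 0 "N'-1" "norm phi", OF c_fB[OF L'[folded N'_def]] c_fBb[OF L'[folded N'_def]]] N'1
      by auto
    then have "norm phi \<in> L'(0,z)" by (simp add: obs_def)
    then show ?thesis using less.IH[OF N'lt L'[folded N'_def] z(1,2)] by blast
  qed
qed

theorem theorem1:
  fixes phi :: "'p form"
  shows "fin_satisfiable phi \<longleftrightarrow>
    (\<exists>N L. N \<le> 2 ^ (2 ^ (7 * fsize phi)) \<and> compass phi N L \<and> features phi N L (norm phi))"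
proof
  assume "fin_satisfiable phi"
  then obtain N \<sigma> x y where h: "x < y" "y < N" "sat N \<sigma> x y phi" unfolding fin_satisfiable_def by blast
  let ?L = "mL N \<sigma> phi"
  have C: "compass phi N ?L" by (rule model_compass)
  have "norm phi \<in> ?L (x,y)"
    using h(3) Cl_ClPlus[OF normphi_Cl[of phi]] by (simp add: mL_def sat_norm)
  then have in0: "norm phi \<in> (\<lambda>(a,b). ?L (a+x, b+x)) (0, y-x)" using h by simp
  have C2: "compass phi (N - x) (\<lambda>(a,b). ?L (a+x, b+x))" by (rule shift[OF C])
  obtain N' L' where r: "N' \<le> 2 ^ card (atoms phi)" "compass phi N' L'" "features phi N' L' (norm phi)"
  proof -
    have a: "0 < y - x" "y - x < N - x" using h by arith+
    show ?thesis using small[OF C2 a in0] that by blast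
  qed
  have "(2::nat) ^ card (atoms phi) \<le> 2 ^ (2 ^ (7 * fsize phi))"
    by (rule power_increasing[OF card_atoms]) simp
  then show "\<exists>N L. N \<le> 2 ^ (2 ^ (7 * fsize phi)) \<and> compass phi N L \<and> features phi N L (norm phi)"
    using r by (meson order_trans)
next
  assume "\<exists>N L. N \<le> 2 ^ (2 ^ (7 * fsize phi)) \<and> compass phi N L \<and> features phi N L (norm phi)"
  then obtain N L where C: "compass phi N L" and f: "features phi N L (norm phi)" by blast
  then obtain x y where p: "x < y" "y < N" "norm phi \<in> L(x,y)" unfolding features_def points_def by blast
  have "sat N (\<lambda>a b. {v. Var v \<in> L(a,b)}) x y (norm phi)"
    using truth[OF C normphi_Cl p(1,2)] p(3) by simp
  then have "sat N (\<lambda>a b. {v. Var v \<in> L(a,b)}) x y phi" by (simp add: sat_norm)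
  then show "fin_satisfiable phi" unfolding fin_satisfiable_def using p by blast
qed

end
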